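(* Let $(C^\bullet,\mathrm d)$ be a $\mathbb Z$-graded cochain complex of vector spaces and let $L:C^\bullet\to C^{\bullet+s}$ be a linear map of degree $s$ (for some integer $s$) which is a chain map up to sign, i.e. $\mathrm dL=\epsilon L\mathrm d$ for a fixed $\epsilon\in\{1,-1\}$. Then $\ker L$ is a subcomplex, and the following are equivalent: (i) for every $\alpha\in C^\bullet$, $\alpha\in\ker\mathrm d\cap\operatorname{im}L$ if and only if $\alpha\in\operatorname{im}(\mathrm dL)$; (ii) the map $H((\ker L)^\bullet,\mathrm d)\to H(C^\bullet,\mathrm d)$ induced by inclusion is an isomorphism in every degree. *)

theory Defs
  imports Complex_Main
begin

text \<open>Graded objects are modelled inside one ambient vector space \<open>'v\<close> over a field \<open>'k\<close>
  (scalar multiplication \<open>scale\<close>): the degree-\<open>n\<close> component \<open>C n\<close> is a linear subspace,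
  and degree-wise maps are families \<open>f n :: 'v \<Rightarrow> 'v\<close>, relevant only on \<open>C n\<close>.\<close>

definition linear_on :: "('k \<Rightarrow> 'v \<Rightarrow> 'v) \<Rightarrow> 'v set \<Rightarrow> 'v set \<Rightarrow> ('v \<Rightarrow> 'v::ab_group_add) \<Rightarrow> bool" where
  "linear_on scale V W f \<longleftrightarrow> f ` V \<subseteq> W \<and>
     (\<forall>x\<in>V. \<forall>y\<in>V. f (x + y) = f x + f y) \<and>
     (\<forall>c. \<forall>x\<in>V. f (scale c x) = scale c (f x))"

definition cochain_complex :: "('k::field \<Rightarrow> 'v \<Rightarrow> 'v) \<Rightarrow> (int \<Rightarrow> 'v set) \<Rightarrow> (int \<Rightarrow> 'v \<Rightarrow> 'v::ab_group_add) \<Rightarrow> bool" where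
  "cochain_complex scale C d \<longleftrightarrow> vector_space scale \<and>
     (\<forall>n. module.subspace scale (C n)) \<and>
     (\<forall>n. linear_on scale (C n) (C (n + 1)) (d n)) \<and>
     (\<forall>n. \<forall>x\<in>C n. d (n + 1) (d n x) = 0)"

definition subcomplex :: "('k::field \<Rightarrow> 'v \<Rightarrow> 'v) \<Rightarrow> (int \<Rightarrow> 'v set) \<Rightarrow> (int \<Rightarrow> 'v set) \<Rightarrow> (int \<Rightarrow> 'v \<Rightarrow> 'v::ab_group_add) \<Rightarrow> bool" where
  "subcomplex scale K C d \<longleftrightarrow>
     (\<forall>n. module.subspace scale (K n) \<and> K n \<subseteq> C n) \<and>
     (\<forall>n. \<forall>x\<in>K n. d n x \<in> K (n + 1))"

definition cocycles :: "(int \<Rightarrow> 'v set) \<Rightarrow> (int \<Rightarrow> 'v \<Rightarrow> 'v::zero) \<Rightarrow> int \<Rightarrow> 'v set" where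
  "cocycles C d n = {x \<in> C n. d n x = 0}"

definition coboundaries :: "(int \<Rightarrow> 'v set) \<Rightarrow> (int \<Rightarrow> 'v \<Rightarrow> 'v) \<Rightarrow> int \<Rightarrow> 'v set" where
  "coboundaries C d n = d (n - 1) ` C (n - 1)"

definition coset :: "'v set \<Rightarrow> 'v::plus \<Rightarrow> 'v set" where
  "coset B z = (\<lambda>b. z + b) ` B"

definition cohomology :: "(int \<Rightarrow> 'v set) \<Rightarrow> (int \<Rightarrow> 'v \<Rightarrow> 'v::ab_group_add) \<Rightarrow> int \<Rightarrow> 'v set set" where
  "cohomology C d n = coset (coboundaries C d n) ` cocycles C d n"

text \<open>Map on cohomology induced by the inclusion of a subcomplex \<open>K\<close> into \<open>C\<close>:
  the class \<open>[z]_K\<close> is sent to \<open>[z]_C\<close> (independent of the representative).\<close>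
definition incl_cohom_map :: "(int \<Rightarrow> 'v set) \<Rightarrow> (int \<Rightarrow> 'v \<Rightarrow> 'v::ab_group_add) \<Rightarrow> int \<Rightarrow> 'v set \<Rightarrow> 'v set" where
  "incl_cohom_map C d n X = coset (coboundaries C d n) (SOME z. z \<in> X)"

end

theory Submission
  imports Defs
begin

lemma coset_eq_iff:
  fixes B :: "'v::ab_group_add set"
  assumes B0: "0 \<in> B" and Badd: "\<And>x y. x \<in> B \<Longrightarrow> y \<in> B \<Longrightarrow> x + y \<in> B"
    and Bneg: "\<And>x. x \<in> B \<Longrightarrow> - x \<in> B"
  shows "coset B a = coset B b \<longleftrightarrow> a - b \<in> B"
proof
  assume h: "coset B a = coset B b"
  have "a \<in> coset B a" unfolding coset_def using B0 by (metis add.right_neutral image_eqI)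
  then have "a \<in> coset B b" using h by simp
  then obtain c where "c \<in> B" "a = b + c" unfolding coset_def by auto
  then show "a - b \<in> B" by simp
next
  assume h: "a - b \<in> B"
  have "-(a - b) \<in> B" using Bneg h by blast
  show "coset B a = coset B b"
  proof
    show "coset B a \<subseteq> coset B b"
    proof
      fix x assume "x \<in> coset B a"
      then obtain c where c: "c \<in> B" "x = a + c" unfolding coset_def by auto
      have "x = b + ((a - b) + c)" using c by (simp add: algebra_simps)
      moreover have "(a - b) + c \<in> B" using Badd h c by blast
      ultimately show "x \<in> coset B b" unfolding coset_def by blast
    qed
  next
    show "coset B b \<subseteq> coset B a"
    proof
      fix x assume "x \<in> coset B b"
      then obtain c where c: "c \<in> B" "x = b + c" unfolding coset_def by auto
      have "x = a + (-(a - b) + c)" using c by (simp add: algebra_simps)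
      moreover have "-(a - b) + c \<in> B" using Badd \<open>-(a - b) \<in> B\<close> c by blast
      ultimately show "x \<in> coset B a" unfolding coset_def by blast
    qed
  qed
qed

locale dlc = vector_space scale for scale :: "'k::field \<Rightarrow> 'v::ab_group_add \<Rightarrow> 'v" +
  fixes C :: "int \<Rightarrow> 'v set" and d :: "int \<Rightarrow> 'v \<Rightarrow> 'v"
    and L :: "int \<Rightarrow> 'v \<Rightarrow> 'v" and s :: int and \<epsilon> :: 'k
  assumes Csub: "\<And>n. subspace (C n)"
    and dlin: "\<And>n. linear_on scale (C n) (C (n + 1)) (d n)"
    and dd0: "\<And>n x. x \<in> C n \<Longrightarrow> d (n + 1) (d n x) = 0"
    and L_lin: "\<And>n. linear_on scale (C n) (C (n + s)) (L n)"
    and eps: "\<epsilon> = 1 \<or> \<epsilon> = -1"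
    and dL: "\<And>n x. x \<in> C n \<Longrightarrow> d (n + s) (L n x) = scale \<epsilon> (L (n + 1) (d n x))"
begin

definition K where "K n = {x \<in> C n. L n x = 0}"
definition Z where "Z n = {x \<in> C n. d n x = 0}"
definition B where "B n = d (n - 1) ` C (n - 1)"
definition ZK where "ZK n = {x \<in> K n. d n x = 0}"
definition BK where "BK n = d (n - 1) ` K (n - 1)"

lemma C0: "0 \<in> C n" using Csub subspace_0 by blast
lemma Cadd: "x \<in> C n \<Longrightarrow> y \<in> C n \<Longrightarrow> x + y \<in> C n" using Csub subspace_add by blast
lemma Cdiff: "x \<in> C n \<Longrightarrow> y \<in> C n \<Longrightarrow> x - y \<in> C n" using Csub subspace_diff by blast
lemma Cneg: "x \<in> C n \<Longrightarrow> - x \<in> C n" using Csub subspace_neg by blast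
lemma Cscale: "x \<in> C n \<Longrightarrow> scale c x \<in> C n" using Csub subspace_scale by blast

lemma lin_diff:
  assumes "subspace V" "linear_on scale V W f" "x \<in> V" "y \<in> V"
  shows "f (x - y) = f x - f y"
proof -
  have "x - y \<in> V" using assms subspace_diff by blast
  then have "f ((x - y) + y) = f (x - y) + f y" using assms unfolding linear_on_def by blast
  then show ?thesis by (simp add: algebra_simps)
qed

lemma d_in': "x \<in> C m \<Longrightarrow> p = m + 1 \<Longrightarrow> d m x \<in> C p"
  using dlin[of m] unfolding linear_on_def by blast
lemma L_in': "x \<in> C m \<Longrightarrow> p = m + s \<Longrightarrow> L m x \<in> C p"
  using L_lin[of m] unfolding linear_on_def by blast
lemma d_diff: "x \<in> C m \<Longrightarrow> y \<in> C m \<Longrightarrow> d m (x - y) = d m x - d m y"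
  using lin_diff[OF Csub dlin] by blast
lemma L_diff: "x \<in> C m \<Longrightarrow> y \<in> C m \<Longrightarrow> L m (x - y) = L m x - L m y"
  using lin_diff[OF Csub L_lin] by blast
lemma d_add: "x \<in> C m \<Longrightarrow> y \<in> C m \<Longrightarrow> d m (x + y) = d m x + d m y"
  using dlin[of m] unfolding linear_on_def by blast
lemma d_scale: "x \<in> C m \<Longrightarrow> d m (scale c x) = scale c (d m x)"
  using dlin[of m] unfolding linear_on_def by blast
lemma L_scale: "x \<in> C m \<Longrightarrow> L m (scale c x) = scale c (L m x)"
  using L_lin[of m] unfolding linear_on_def by blast
lemma d_0: "d m 0 = 0" using d_diff[OF C0 C0, of m] by simp
lemma L_0: "L m 0 = 0" using L_diff[OF C0 C0, of m] by simp
lemma d_neg: "x \<in> C m \<Longrightarrow> d m (- x) = - d m x"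
  using d_diff[OF C0, of x m] by (simp add: d_0)
lemma dd': "x \<in> C m \<Longrightarrow> p = m + 1 \<Longrightarrow> d p (d m x) = 0" using dd0 by blast
lemma dL': "x \<in> C m \<Longrightarrow> p = m + s \<Longrightarrow> q = m + 1 \<Longrightarrow> d p (L m x) = scale \<epsilon> (L q (d m x))"
  using dL by blast
lemma ee: "scale \<epsilon> (scale \<epsilon> x) = x" using eps by auto
lemma eps_nz: "\<epsilon> \<noteq> 0" using eps by auto

lemma K_sub: "subspace (K n)"
  unfolding subspace_def
proof (intro conjI ballI allI)
  show "0 \<in> K n" unfolding K_def using C0 L_0 by simp
next
  fix x y assume "x \<in> K n" "y \<in> K n"
  then show "x + y \<in> K n" unfolding K_def using Cadd L_lin[of n] unfolding linear_on_def by auto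
next
  fix c x assume "x \<in> K n"
  then show "scale c x \<in> K n" unfolding K_def using Cscale L_scale by auto
qed

lemma KC: "K n \<subseteq> C n" unfolding K_def by auto

lemma subcx: "subcomplex scale K C d"
  unfolding subcomplex_def
proof (intro conjI allI ballI)
  fix n show "subspace (K n)" by (rule K_sub)
  show "K n \<subseteq> C n" by (rule KC)
next
  fix n x assume x: "x \<in> K n"
  then have xC: "x \<in> C n" and Lx: "L n x = 0" unfolding K_def by auto
  have "d (n + s) (L n x) = scale \<epsilon> (L (n + 1) (d n x))" using dL xC by blast
  then have "L (n + 1) (d n x) = 0" using Lx d_0 eps_nz by simp
  then show "d n x \<in> K (n + 1)" unfolding K_def using d_in'[OF xC refl] by blast
qed

lemma B_grp: "0 \<in> B n" "x \<in> B n \<Longrightarrow> y \<in> B n \<Longrightarrow> x + y \<in> B n" "x \<in> B n \<Longrightarrow> - x \<in> B n"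
proof -
  show "0 \<in> B n" unfolding B_def using C0 d_0 by (metis image_eqI)
  show "x \<in> B n \<Longrightarrow> y \<in> B n \<Longrightarrow> x + y \<in> B n"
  proof -
    assume "x \<in> B n" "y \<in> B n"
    then obtain a b where "a \<in> C (n-1)" "b \<in> C (n-1)" "x = d (n-1) a" "y = d (n-1) b" unfolding B_def by auto
    then show ?thesis unfolding B_def using d_add Cadd by (intro image_eqI[of _ _ "a + b"]) auto
  qed
  show "x \<in> B n \<Longrightarrow> - x \<in> B n"
  proof -
    assume "x \<in> B n"
    then obtain a where "a \<in> C (n-1)" "x = d (n-1) a" unfolding B_def by auto
    then show ?thesis unfolding B_def using d_neg Cneg by (intro image_eqI[of _ _ "- a"]) auto
  qed
qed

lemma BK_grp: "0 \<in> BK n" "x \<in> BK n \<Longrightarrow> y \<in> BK n \<Longrightarrow> x + y \<in> BK n" "x \<in> BK n \<Longrightarrow> - x \<in> BK n"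
proof -
  have K0: "0 \<in> K m" for m using K_sub subspace_0 by blast
  have Kadd: "x \<in> K m \<Longrightarrow> y \<in> K m \<Longrightarrow> x + y \<in> K m" for x y m using K_sub subspace_add by blast
  have Kneg: "x \<in> K m \<Longrightarrow> - x \<in> K m" for x m using K_sub subspace_neg by blast
  show "0 \<in> BK n" unfolding BK_def using K0 d_0 by (metis image_eqI)
  show "x \<in> BK n \<Longrightarrow> y \<in> BK n \<Longrightarrow> x + y \<in> BK n"
  proof -
    assume "x \<in> BK n" "y \<in> BK n"
    then obtain a b where ab: "a \<in> K (n-1)" "b \<in> K (n-1)" "x = d (n-1) a" "y = d (n-1) b" unfolding BK_def by auto
    have "a \<in> C (n-1)" "b \<in> C (n-1)" using ab KC by auto
    then show ?thesis unfolding BK_def using ab d_add Kadd by (intro image_eqI[of _ _ "a + b"]) auto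
  qed
  show "x \<in> BK n \<Longrightarrow> - x \<in> BK n"
  proof -
    assume "x \<in> BK n"
    then obtain a where a: "a \<in> K (n-1)" "x = d (n-1) a" unfolding BK_def by auto
    have "a \<in> C (n-1)" using a KC by auto
    then show ?thesis unfolding BK_def using a d_neg Kneg by (intro image_eqI[of _ _ "- a"]) auto
  qed
qed

lemma BK_B: "BK n \<subseteq> B n" unfolding BK_def B_def using KC by blast

lemma coset_B: "coset (B n) a = coset (B n) b \<longleftrightarrow> a - b \<in> B n"
  by (rule coset_eq_iff) (use B_grp in auto)
lemma coset_BK: "coset (BK n) a = coset (BK n) b \<longleftrightarrow> a - b \<in> BK n"
  by (rule coset_eq_iff) (use BK_grp in auto)

lemma ZK_diff: "x \<in> ZK n \<Longrightarrow> y \<in> ZK n \<Longrightarrow> x - y \<in> ZK n"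
proof -
  assume "x \<in> ZK n" "y \<in> ZK n"
  then have h: "x \<in> K n" "y \<in> K n" "d n x = 0" "d n y = 0" unfolding ZK_def by auto
  have "x \<in> C n" "y \<in> C n" using h KC by auto
  then show ?thesis unfolding ZK_def using h K_sub subspace_diff d_diff by auto
qed

lemma ZK_Z: "ZK n \<subseteq> Z n" unfolding ZK_def Z_def using KC by auto

lemma incl_eq: assumes "z \<in> ZK n"
  shows "incl_cohom_map C d n (coset (BK n) z) = coset (B n) z"
proof -
  have ex: "z \<in> coset (BK n) z" unfolding coset_def using BK_grp(1) by (metis add.right_neutral image_eqI)
  define w where "w = (SOME w. w \<in> coset (BK n) z)"
  have "w \<in> coset (BK n) z" unfolding w_def using ex by (rule someI)
  then obtain b where b: "b \<in> BK n" "w = z + b" unfolding coset_def by auto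
  have "w - z \<in> B n" using b BK_B by auto
  then have "coset (B n) w = coset (B n) z" using coset_B by blast
  moreover have "coboundaries C d n = B n" unfolding coboundaries_def B_def by simp
  ultimately show ?thesis unfolding incl_cohom_map_def w_def by simp
qed

lemma cohK: "cohomology K d n = coset (BK n) ` ZK n"
  unfolding cohomology_def cocycles_def coboundaries_def ZK_def BK_def by simp
lemma cohC: "cohomology C d n = coset (B n) ` Z n"
  unfolding cohomology_def cocycles_def coboundaries_def Z_def B_def by simp

lemma bij_char:
  "bij_betw (incl_cohom_map C d n) (cohomology K d n) (cohomology C d n) \<longleftrightarrow>
   ((\<forall>z\<in>ZK n. z \<in> B n \<longrightarrow> z \<in> BK n) \<and> (\<forall>z\<in>Z n. \<exists>z'\<in>ZK n. z - z' \<in> B n))"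
  (is "?L \<longleftrightarrow> ?R")
proof -
  let ?f = "incl_cohom_map C d n"
  have img: "?f ` cohomology K d n = coset (B n) ` ZK n"
    unfolding cohK image_image using incl_eq by (auto simp: image_def)
  have Z0: "0 \<in> ZK n" unfolding ZK_def using K_sub subspace_0 d_0 by blast
  show ?thesis
  proof
    assume L: ?L
    show ?R
    proof (intro conjI ballI impI)
      fix z assume z: "z \<in> ZK n" "z \<in> B n"
      have "?f (coset (BK n) z) = ?f (coset (BK n) 0)"
        using incl_eq[OF z(1)] incl_eq[OF Z0] coset_B z(2) by simp
      moreover have "coset (BK n) z \<in> cohomology K d n" "coset (BK n) 0 \<in> cohomology K d n"
        using z(1) Z0 cohK by auto
      ultimately have "coset (BK n) z = coset (BK n) 0"
        using L unfolding bij_betw_def inj_on_def by blast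
      then show "z \<in> BK n" using coset_BK by simp
    next
      fix z assume z: "z \<in> Z n"
      then have "coset (B n) z \<in> coset (B n) ` ZK n" using L img cohC unfolding bij_betw_def by auto
      then obtain z' where "z' \<in> ZK n" "coset (B n) z = coset (B n) z'" by auto
      then show "\<exists>z'\<in>ZK n. z - z' \<in> B n" using coset_B by blast
    qed
  next
    assume R: ?R
    have inj: "inj_on ?f (cohomology K d n)"
    proof (rule inj_onI)
      fix X Y assume X: "X \<in> cohomology K d n" and Y: "Y \<in> cohomology K d n" and e: "?f X = ?f Y"
      obtain x where x: "x \<in> ZK n" "X = coset (BK n) x" using X cohK by auto
      obtain y where y: "y \<in> ZK n" "Y = coset (BK n) y" using Y cohK by auto
      have "x - y \<in> B n" using e x y incl_eq coset_B by simp
      moreover have "x - y \<in> ZK n" using ZK_diff x y by blast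
      ultimately have "x - y \<in> BK n" using R by blast
      then show "X = Y" using x y coset_BK by simp
    qed
    have "coset (B n) ` ZK n = coset (B n) ` Z n"
    proof
      show "coset (B n) ` ZK n \<subseteq> coset (B n) ` Z n" using ZK_Z by blast
      show "coset (B n) ` Z n \<subseteq> coset (B n) ` ZK n"
      proof
        fix X assume "X \<in> coset (B n) ` Z n"
        then obtain z where z: "z \<in> Z n" "X = coset (B n) z" by auto
        then obtain z' where "z' \<in> ZK n" "z - z' \<in> B n" using R by blast
        then show "X \<in> coset (B n) ` ZK n" using z coset_B by auto
      qed
    qed
    then show ?L using inj img cohC unfolding bij_betw_def by simp
  qed
qed

lemma main:
  "(\<forall>n. \<forall>\<alpha>\<in>C n.
        (\<alpha> \<in> cocycles C d n \<and> \<alpha> \<in> L (n - s) ` C (n - s))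
          \<longleftrightarrow> \<alpha> \<in> (\<lambda>y. d (n - 1) (L (n - 1 - s) y)) ` C (n - 1 - s))
   \<longleftrightarrow> (\<forall>n. (\<forall>z\<in>ZK n. z \<in> B n \<longrightarrow> z \<in> BK n) \<and> (\<forall>z\<in>Z n. \<exists>z'\<in>ZK n. z - z' \<in> B n))"
  (is "?P \<longleftrightarrow> ?Q")
proof
  assume P: ?P
  show ?Q
  proof (intro allI conjI ballI impI)
    fix n z assume zK: "z \<in> ZK n" and zB: "z \<in> B n"
    obtain c where c: "c \<in> C (n - 1)" "z = d (n - 1) c" using zB unfolding B_def by auto
    have zC: "z \<in> C n" and Lz: "L n z = 0" using zK unfolding ZK_def K_def by auto
    define m where "m = n - 1 + s"
    define \<alpha> where "\<alpha> = L (n - 1) c"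
    have aC: "\<alpha> \<in> C m" unfolding \<alpha>_def m_def by (rule L_in'[OF c(1)]) simp
    have "d m \<alpha> = scale \<epsilon> (L n (d (n - 1) c))" unfolding \<alpha>_def m_def
      by (rule dL'[OF c(1)]) simp_all
    then have da: "d m \<alpha> = 0" using c Lz by simp
    have "\<alpha> \<in> L (m - s) ` C (m - s)" using c unfolding \<alpha>_def m_def by simp
    then have "\<alpha> \<in> (\<lambda>y. d (m - 1) (L (m - 1 - s) y)) ` C (m - 1 - s)"
      using P[rule_format, OF aC] aC da unfolding cocycles_def by blast
    then obtain y where y: "y \<in> C (m - 1 - s)" "\<alpha> = d (m - 1) (L (m - 1 - s) y)" by auto
    have i1: "m - 1 - s = n - 2" unfolding m_def by simp
    have y': "y \<in> C (n - 2)" using y(1) i1 by simp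
    have "d (m - 1) (L (n - 2) y) = scale \<epsilon> (L (n - 1) (d (n - 2) y))"
      by (rule dL'[OF y']) (simp_all add: m_def)
    then have a2: "\<alpha> = scale \<epsilon> (L (n - 1) (d (n - 2) y))"
      using y(2) i1 by simp
    define e where "e = d (n - 2) y"
    have eC: "e \<in> C (n - 1)" unfolding e_def by (rule d_in'[OF y']) simp
    have de: "d (n - 1) e = 0" unfolding e_def by (rule dd'[OF y']) simp
    define c' where "c' = c - scale \<epsilon> e"
    have c'C: "c' \<in> C (n - 1)" unfolding c'_def using c eC Cdiff Cscale by blast
    have "L (n - 1) c' = \<alpha> - scale \<epsilon> (L (n - 1) e)"
      unfolding c'_def \<alpha>_def using L_diff[OF c(1) Cscale[OF eC]] L_scale[OF eC] by simp
    then have Lc': "L (n - 1) c' = 0" using a2 unfolding e_def by simp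
    have "d (n - 1) c' = z" unfolding c'_def
      using d_diff[OF c(1) Cscale[OF eC]] d_scale[OF eC] de c(2) by simp
    then show "z \<in> BK n" unfolding BK_def K_def using c'C Lc' by force
  next
    fix n z assume zZ: "z \<in> Z n"
    have zC: "z \<in> C n" and dz: "d n z = 0" using zZ unfolding Z_def by auto
    define \<alpha> where "\<alpha> = L n z"
    have aC: "\<alpha> \<in> C (n + s)" unfolding \<alpha>_def by (rule L_in'[OF zC]) simp
    have "d (n + s) \<alpha> = scale \<epsilon> (L (n + 1) (d n z))" unfolding \<alpha>_def using dL zC by blast
    then have da: "d (n + s) \<alpha> = 0" using dz L_0 by simp
    have "\<alpha> \<in> L (n + s - s) ` C (n + s - s)" using zC unfolding \<alpha>_def by simp
    then have "\<alpha> \<in> (\<lambda>y. d (n + s - 1) (L (n + s - 1 - s) y)) ` C (n + s - 1 - s)"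
      using P[rule_format, OF aC] aC da unfolding cocycles_def by blast
    then obtain y where y: "y \<in> C (n - 1)" "\<alpha> = d (n + s - 1) (L (n - 1) y)" by auto
    have "d (n + s - 1) (L (n - 1) y) = scale \<epsilon> (L n (d (n - 1) y))"
      by (rule dL'[OF y(1)]) simp_all
    then have a2: "\<alpha> = scale \<epsilon> (L n (d (n - 1) y))" using y(2) by simp
    define e where "e = d (n - 1) y"
    have eC: "e \<in> C n" unfolding e_def by (rule d_in'[OF y(1)]) simp
    have de: "d n e = 0" unfolding e_def by (rule dd'[OF y(1)]) simp
    define z' where "z' = z - scale \<epsilon> e"
    have z'C: "z' \<in> C n" unfolding z'_def using zC eC Cdiff Cscale by blast
    have "L n z' = \<alpha> - scale \<epsilon> (L n e)"
      unfolding z'_def \<alpha>_def using L_diff[OF zC Cscale[OF eC]] L_scale[OF eC] by simp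
    then have Lz': "L n z' = 0" using a2 unfolding e_def by simp
    have dz': "d n z' = 0" unfolding z'_def
      using d_diff[OF zC Cscale[OF eC]] d_scale[OF eC] de dz by simp
    have "z - z' = d (n - 1) (scale \<epsilon> y)" unfolding z'_def e_def using d_scale[OF y(1)] by simp
    then have "z - z' \<in> B n" unfolding B_def using Cscale[OF y(1)] by blast
    moreover have "z' \<in> ZK n" unfolding ZK_def K_def using z'C Lz' dz' by simp
    ultimately show "\<exists>z'\<in>ZK n. z - z' \<in> B n" by blast
  qed
next
  assume Q: ?Q
  show ?P
  proof (intro allI ballI iffI)
    fix n \<alpha> assume aC: "\<alpha> \<in> C n"
    assume h: "\<alpha> \<in> (\<lambda>y. d (n - 1) (L (n - 1 - s) y)) ` C (n - 1 - s)"
    then obtain y where y: "y \<in> C (n - 1 - s)" "\<alpha> = d (n - 1) (L (n - 1 - s) y)" by auto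
    have "d (n - 1) (L (n - 1 - s) y) = scale \<epsilon> (L (n - s) (d (n - 1 - s) y))"
      by (rule dL'[OF y(1)]) simp_all
    then have a2: "\<alpha> = scale \<epsilon> (L (n - s) (d (n - 1 - s) y))" using y(2) by simp
    have dy: "d (n - 1 - s) y \<in> C (n - s)" by (rule d_in'[OF y(1)]) simp
    have "\<alpha> = L (n - s) (scale \<epsilon> (d (n - 1 - s) y))" using a2 L_scale[OF dy] by simp
    then have "\<alpha> \<in> L (n - s) ` C (n - s)" using Cscale[OF dy] by blast
    moreover have "d n \<alpha> = 0"
    proof -
      have "L (n - 1 - s) y \<in> C (n - 1)" by (rule L_in'[OF y(1)]) simp
      then show ?thesis unfolding y(2) by (rule dd') simp
    qed
    ultimately show "\<alpha> \<in> cocycles C d n \<and> \<alpha> \<in> L (n - s) ` C (n - s)"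
      unfolding cocycles_def using aC by simp
  next
    fix n \<alpha> assume aC: "\<alpha> \<in> C n"
    assume h: "\<alpha> \<in> cocycles C d n \<and> \<alpha> \<in> L (n - s) ` C (n - s)"
    define k where "k = n - s"
    obtain \<beta> where b: "\<beta> \<in> C k" "\<alpha> = L k \<beta>" using h unfolding k_def by auto
    have da: "d n \<alpha> = 0" using h unfolding cocycles_def by simp
    define e where "e = d k \<beta>"
    have eC: "e \<in> C (k + 1)" unfolding e_def by (rule d_in'[OF b(1)]) simp
    have "d n \<alpha> = scale \<epsilon> (L (k + 1) e)" unfolding e_def b(2)
      by (rule dL'[OF b(1)]) (simp_all add: k_def)
    then have Le: "L (k + 1) e = 0" using da eps_nz by simp
    have de: "d (k + 1) e = 0" unfolding e_def by (rule dd'[OF b(1)]) simp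
    have eZK: "e \<in> ZK (k + 1)" unfolding ZK_def K_def using eC Le de by simp
    have "e \<in> B (k + 1)" unfolding B_def e_def using b(1) by simp
    then have "e \<in> BK (k + 1)" using Q eZK by blast
    then obtain \<gamma> where g: "\<gamma> \<in> K k" "e = d k \<gamma>" unfolding BK_def by auto
    have gC: "\<gamma> \<in> C k" and Lg: "L k \<gamma> = 0" using g KC unfolding K_def by auto
    have bgC: "\<beta> - \<gamma> \<in> C k" using b gC Cdiff by blast
    have "d k (\<beta> - \<gamma>) = 0" using d_diff[OF b(1) gC] g(2) unfolding e_def by simp
    then have "\<beta> - \<gamma> \<in> Z k" unfolding Z_def using bgC by simp
    then obtain z' where z': "z' \<in> ZK k" "\<beta> - \<gamma> - z' \<in> B k" using Q by blast
    have z'C: "z' \<in> C k" and Lz': "L k z' = 0" using z' KC unfolding ZK_def K_def by auto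
    obtain w where w: "w \<in> C (k - 1)" "\<beta> - \<gamma> - z' = d (k - 1) w" using z'(2) unfolding B_def by auto
    have "L k (\<beta> - \<gamma> - z') = L k \<beta>"
      using L_diff[OF bgC z'C] L_diff[OF b(1) gC] Lg Lz' by simp
    then have a1: "\<alpha> = L k (d (k - 1) w)" using b(2) w(2) by simp
    have "d (n - 1) (L (k - 1) w) = scale \<epsilon> (L k (d (k - 1) w))"
      by (rule dL'[OF w(1)]) (simp_all add: k_def)
    then have "\<alpha> = scale \<epsilon> (d (n - 1) (L (k - 1) w))" using a1 ee by simp
    also have "\<dots> = d (n - 1) (L (k - 1) (scale \<epsilon> w))"
      using L_scale[OF w(1)] d_scale[OF L_in'[OF w(1) refl]] by (simp add: k_def)
    moreover have k1: "k - 1 = n - 1 - s" unfolding k_def by simp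
    ultimately have "\<alpha> = d (n - 1) (L (n - 1 - s) (scale \<epsilon> w))" by simp
    moreover have "scale \<epsilon> w \<in> C (n - 1 - s)" using Cscale[OF w(1)] k1 by simp
    ultimately show "\<alpha> \<in> (\<lambda>y. d (n - 1) (L (n - 1 - s) y)) ` C (n - 1 - s)" by blast
  qed
qed

end

theorem theorem3p25:
  fixes scale :: "'k::field \<Rightarrow> 'v::ab_group_add \<Rightarrow> 'v"
    and C :: "int \<Rightarrow> 'v set" and d :: "int \<Rightarrow> 'v \<Rightarrow> 'v"
    and L :: "int \<Rightarrow> 'v \<Rightarrow> 'v" and s :: int and \<epsilon> :: 'k
  assumes cx: "cochain_complex scale C d"
    and L_lin: "\<And>n. linear_on scale (C n) (C (n + s)) (L n)"
    and eps: "\<epsilon> = 1 \<or> \<epsilon> = -1"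
    and dL: "\<And>n x. x \<in> C n \<Longrightarrow> d (n + s) (L n x) = scale \<epsilon> (L (n + 1) (d n x))"
  defines "K \<equiv> (\<lambda>n. {x \<in> C n. L n x = 0})"
  shows "subcomplex scale K C d \<and>
    ((\<forall>n. \<forall>\<alpha>\<in>C n.
        (\<alpha> \<in> cocycles C d n \<and> \<alpha> \<in> L (n - s) ` C (n - s))
          \<longleftrightarrow> \<alpha> \<in> (\<lambda>y. d (n - 1) (L (n - 1 - s) y)) ` C (n - 1 - s))
     \<longleftrightarrow> (\<forall>n. bij_betw (incl_cohom_map C d n) (cohomology K d n) (cohomology C d n)))"
proof -
  interpret D: dlc scale C d L s \<epsilon>
    using cx L_lin eps dL unfolding cochain_complex_def dlc_def dlc_axioms_def by blast
  have KK: "K = D.K" unfolding K_def D.K_def by (rule ext) simp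
  show ?thesis unfolding KK using D.subcx D.main D.bij_char by simp
qed

end
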